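(* Let $\mathbf I=\langle I,\vee\rangle$ be a join-semilattice with order $\preceq$ (strict part $\prec$), let $\{\langle A_p,\le_p\rangle: p\in I\}$ be pairwise disjoint posets, and for $p\preceq q$ let $\psi_{pq},\varphi_{pq}:A_p\to A_q$ be monotone maps with $\varphi_{pp}=\psi_{pp}=\mathrm{id}_{A_p}$, $\varphi_{qr}\circ\varphi_{pq}=\varphi_{pr}$ and $\psi_{qr}\circ\psi_{pq}=\psi_{pr}$ for $p\preceq q\preceq r$. On $A:=\biguplus_pA_p$ define $a\le b$ (for $a\in A_p$, $b\in A_q$) iff $\varphi_{ps}(a)\le_s\psi_{qs}(b)$ where $s:=p\vee q$. Then $\le$ is a partial order on $A$ with $\le\cap A_p^2=\le_p$ for every $p\in I$ if and only if the following two conditions hold: (S1) whenever $p\prec q$, $p\prec r$ and $t:=q\vee r$, we have $\varphi_{qt}(\psi_{pq}(a))\le_t\psi_{rt}(\varphi_{pr}(a))$ for all $a\in A_p$; (S2) whenever $p\prec q$, $a,b\in A_p$ and $\varphi_{pq}(a)\le_q\psi_{pq}(b)$, then $a<_pb$. *)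

theory Defs
  imports Main
begin

definition sum_rel ::
  "('i::semilattice_sup \<Rightarrow> 'a set) \<Rightarrow> ('i \<Rightarrow> ('a \<times> 'a) set)
   \<Rightarrow> ('i \<Rightarrow> 'i \<Rightarrow> 'a \<Rightarrow> 'a) \<Rightarrow> ('i \<Rightarrow> 'i \<Rightarrow> 'a \<Rightarrow> 'a) \<Rightarrow> ('a \<times> 'a) set" where
  "sum_rel A leq phi psi =
     {(a, b). \<exists>p q. a \<in> A p \<and> b \<in> A q \<and>
        (phi p (sup p q) a, psi q (sup p q) b) \<in> leq (sup p q)}"

end

theory Submission
  imports Defs
begin

theorem theorem5p1:
  fixes A :: "'i::semilattice_sup \<Rightarrow> 'a set"
    and leq :: "'i \<Rightarrow> ('a \<times> 'a) set"
    and phi psi :: "'i \<Rightarrow> 'i \<Rightarrow> 'a \<Rightarrow> 'a"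
  assumes posets: "\<And>p. partial_order_on (A p) (leq p)"
    and disjoint: "\<And>p q. p \<noteq> q \<Longrightarrow> A p \<inter> A q = {}"
    and phi_maps: "\<And>p q a. p \<le> q \<Longrightarrow> a \<in> A p \<Longrightarrow> phi p q a \<in> A q"
    and psi_maps: "\<And>p q a. p \<le> q \<Longrightarrow> a \<in> A p \<Longrightarrow> psi p q a \<in> A q"
    and phi_mono: "\<And>p q a b. p \<le> q \<Longrightarrow> a \<in> A p \<Longrightarrow> b \<in> A p \<Longrightarrow> (a, b) \<in> leq p
                     \<Longrightarrow> (phi p q a, phi p q b) \<in> leq q"
    and psi_mono: "\<And>p q a b. p \<le> q \<Longrightarrow> a \<in> A p \<Longrightarrow> b \<in> A p \<Longrightarrow> (a, b) \<in> leq p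
                     \<Longrightarrow> (psi p q a, psi p q b) \<in> leq q"
    and phi_id: "\<And>p a. a \<in> A p \<Longrightarrow> phi p p a = a"
    and psi_id: "\<And>p a. a \<in> A p \<Longrightarrow> psi p p a = a"
    and phi_comp: "\<And>p q r a. p \<le> q \<Longrightarrow> q \<le> r \<Longrightarrow> a \<in> A p
                     \<Longrightarrow> phi q r (phi p q a) = phi p r a"
    and psi_comp: "\<And>p q r a. p \<le> q \<Longrightarrow> q \<le> r \<Longrightarrow> a \<in> A p
                     \<Longrightarrow> psi q r (psi p q a) = psi p r a"
  shows "(partial_order_on (\<Union>p. A p) (sum_rel A leq phi psi) \<and>
          (\<forall>p. sum_rel A leq phi psi \<inter> (A p \<times> A p) = leq p))
     \<longleftrightarrow>
         ((\<forall>p q r a. p < q \<longrightarrow> p < r \<longrightarrow> a \<in> A p \<longrightarrow>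
             (phi q (sup q r) (psi p q a), psi r (sup q r) (phi p r a)) \<in> leq (sup q r)) \<and>
          (\<forall>p q a b. p < q \<longrightarrow> a \<in> A p \<longrightarrow> b \<in> A p \<longrightarrow>
             (phi p q a, psi p q b) \<in> leq q \<longrightarrow> (a, b) \<in> leq p \<and> a \<noteq> b))"
proof -
  let ?R = "sum_rel A leq phi psi"
  have uniq: "\<And>p p' a. a \<in> A p \<Longrightarrow> a \<in> A p' \<Longrightarrow> p = p'"
    using disjoint by blast
  have refl: "\<And>p a. a \<in> A p \<Longrightarrow> (a, a) \<in> leq p"
    using posets unfolding partial_order_on_def preorder_on_def refl_on_def by blast
  have sub: "\<And>p a b. (a, b) \<in> leq p \<Longrightarrow> a \<in> A p \<and> b \<in> A p"
    using posets unfolding partial_order_on_def preorder_on_def refl_on_def by blast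
  have tr: "\<And>p a b c. (a, b) \<in> leq p \<Longrightarrow> (b, c) \<in> leq p \<Longrightarrow> (a, c) \<in> leq p"
    using posets unfolding partial_order_on_def preorder_on_def trans_def by blast
  have an: "\<And>p a b. (a, b) \<in> leq p \<Longrightarrow> (b, a) \<in> leq p \<Longrightarrow> a = b"
    using posets unfolding partial_order_on_def antisym_def by blast
  have R_iff: "\<And>p q a b. a \<in> A p \<Longrightarrow> b \<in> A q \<Longrightarrow>
      (a, b) \<in> ?R \<longleftrightarrow> (phi p (sup p q) a, psi q (sup p q) b) \<in> leq (sup p q)"
  proof -
    fix p q a b assume a: "a \<in> A p" and b: "b \<in> A q"
    show "(a, b) \<in> ?R \<longleftrightarrow> (phi p (sup p q) a, psi q (sup p q) b) \<in> leq (sup p q)"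
    proof
      assume "(a, b) \<in> ?R"
      then obtain p' q' where "a \<in> A p'" "b \<in> A q'"
        "(phi p' (sup p' q') a, psi q' (sup p' q') b) \<in> leq (sup p' q')"
        unfolding sum_rel_def by blast
      moreover have "p' = p" "q' = q" using uniq a b calculation by blast+
      ultimately show "(phi p (sup p q) a, psi q (sup p q) b) \<in> leq (sup p q)" by simp
    next
      assume "(phi p (sup p q) a, psi q (sup p q) b) \<in> leq (sup p q)"
      then show "(a, b) \<in> ?R" unfolding sum_rel_def using a b by blast
    qed
  qed
  have Rsub: "?R \<subseteq> (\<Union>p. A p) \<times> (\<Union>p. A p)" unfolding sum_rel_def by blast
  have restr: "\<forall>p. ?R \<inter> (A p \<times> A p) = leq p"
  proof
    fix p
    show "?R \<inter> (A p \<times> A p) = leq p"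
    proof (rule set_eqI, clarify)
      fix a b
      show "((a, b) \<in> ?R \<inter> (A p \<times> A p)) = ((a, b) \<in> leq p)"
        using R_iff[of a p b p] phi_id psi_id sub by auto
    qed
  qed
  have Rrefl: "refl_on (\<Union>p. A p) ?R"
    unfolding refl_on_def using Rsub R_iff refl phi_id psi_id by auto
  show ?thesis (is "?L \<longleftrightarrow> ?S1 \<and> ?S2")
  proof
    assume L: "partial_order_on (\<Union>p. A p) ?R \<and> (\<forall>p. ?R \<inter> (A p \<times> A p) = leq p)"
    have Rtr: "\<And>a b c. (a, b) \<in> ?R \<Longrightarrow> (b, c) \<in> ?R \<Longrightarrow> (a, c) \<in> ?R"
      using L unfolding partial_order_on_def preorder_on_def trans_def by blast
    have Ran: "\<And>a b. (a, b) \<in> ?R \<Longrightarrow> (b, a) \<in> ?R \<Longrightarrow> a = b"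
      using L unfolding partial_order_on_def antisym_def by blast
    have S1: "\<forall>p q r a. p < q \<longrightarrow> p < r \<longrightarrow> a \<in> A p \<longrightarrow>
             (phi q (sup q r) (psi p q a), psi r (sup q r) (phi p r a)) \<in> leq (sup q r)"
    proof (intro allI impI)
      fix p q r a assume pq: "p < q" and pr: "p < r" and a: "a \<in> A p"
      define x where "x = psi p q a"
      define y where "y = phi p r a"
      have x: "x \<in> A q" using psi_maps pq a x_def by auto
      have y: "y \<in> A r" using phi_maps pr a y_def by auto
      have "(x, a) \<in> ?R"
        using R_iff[OF x a] pq x refl phi_id x_def sup_absorb1[of p q] by (simp add: sup_commute)
      moreover have "(a, y) \<in> ?R"
        using R_iff[OF a y] pr y refl psi_id y_def sup_absorb2[of p r] by simp
      ultimately have "(x, y) \<in> ?R" by (rule Rtr)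
      then show "(phi q (sup q r) (psi p q a), psi r (sup q r) (phi p r a)) \<in> leq (sup q r)"
        using R_iff[OF x y] x_def y_def by simp
    qed
    have S2: "\<forall>p q a b. p < q \<longrightarrow> a \<in> A p \<longrightarrow> b \<in> A p \<longrightarrow>
             (phi p q a, psi p q b) \<in> leq q \<longrightarrow> (a, b) \<in> leq p \<and> a \<noteq> b"
    proof (intro allI impI)
      fix p q a b assume pq: "p < q" and a: "a \<in> A p" and b: "b \<in> A p"
        and h: "(phi p q a, psi p q b) \<in> leq q"
      define c where "c = phi p q a"
      have c: "c \<in> A q" using phi_maps pq a c_def by auto
      have sq: "sup p q = q" "sup q p = q" using pq by (auto simp: sup_absorb2 sup_absorb1)
      have ac: "(a, c) \<in> ?R"
        using R_iff[OF a c] sq c refl psi_id c_def by simp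
      have cb: "(c, b) \<in> ?R"
        using R_iff[OF c b] sq c h phi_id c_def by simp
      have "(a, b) \<in> ?R" using Rtr[OF ac cb] .
      then have ab: "(a, b) \<in> leq p" using restr a b by blast
      have "a \<noteq> b"
      proof
        assume "a = b"
        then have "a = c" using Ran[OF ac] cb by simp
        then have "p = q" using uniq a c by blast
        then show False using pq by simp
      qed
      then show "(a, b) \<in> leq p \<and> a \<noteq> b" using ab by simp
    qed
    show "?S1 \<and> ?S2" using S1 S2 by blast
  next
    assume H: "?S1 \<and> ?S2"
    have S1: "\<And>p q r a. p < q \<Longrightarrow> p < r \<Longrightarrow> a \<in> A p \<Longrightarrow>
             (phi q (sup q r) (psi p q a), psi r (sup q r) (phi p r a)) \<in> leq (sup q r)"
      using H by blast
    have S2: "\<And>p q a b. p < q \<Longrightarrow> a \<in> A p \<Longrightarrow> b \<in> A p \<Longrightarrow>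
             (phi p q a, psi p q b) \<in> leq q \<Longrightarrow> (a, b) \<in> leq p \<and> a \<noteq> b"
      using H by blast
    have Lm: "\<And>p q a. p \<le> q \<Longrightarrow> a \<in> A p \<Longrightarrow> (psi p q a, phi p q a) \<in> leq q"
    proof -
      fix p q a assume pq: "p \<le> q" and a: "a \<in> A p"
      show "(psi p q a, phi p q a) \<in> leq q"
      proof (cases "p = q")
        case True then show ?thesis using a refl phi_id psi_id by simp
      next
        case False
        then have "p < q" using pq by simp
        from S1[OF this this a] show ?thesis
          using phi_id psi_id psi_maps phi_maps pq a by simp
      qed
    qed
    have S1': "\<And>q q' r' b. q \<le> q' \<Longrightarrow> q \<le> r' \<Longrightarrow> b \<in> A q \<Longrightarrow>
       (phi q' (sup q' r') (psi q q' b), psi r' (sup q' r') (phi q r' b)) \<in> leq (sup q' r')"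
    proof -
      fix q q' r' b assume h: "q \<le> q'" "q \<le> r'" and b: "b \<in> A q"
      show "(phi q' (sup q' r') (psi q q' b), psi r' (sup q' r') (phi q r' b)) \<in> leq (sup q' r')"
      proof (cases "q = q'")
        case True
        then have "sup q' r' = r'" using h by (simp add: sup_absorb2)
        then show ?thesis using True b psi_id psi_maps phi_maps h refl by simp
      next
        case F1: False
        show ?thesis
        proof (cases "q = r'")
          case True
          then have "sup q' r' = q'" using h by (simp add: sup_absorb1)
          then show ?thesis using True b phi_id psi_id psi_maps phi_maps h refl by simp
        next
          case False
          then show ?thesis using S1 F1 h b by (simp add: less_le)
        qed
      qed
    qed
    have Rtrans: "trans ?R"
    proof (rule transI)
      fix a b c assume ab: "(a, b) \<in> ?R" and bc: "(b, c) \<in> ?R"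
      then obtain p q r where a: "a \<in> A p" and b: "b \<in> A q" and c: "c \<in> A r"
        unfolding sum_rel_def by blast
      define pq where "pq = sup p q"
      define qr where "qr = sup q r"
      define pr where "pr = sup p r"
      define u where "u = sup pq qr"
      have le: "p \<le> pq" "q \<le> pq" "q \<le> qr" "r \<le> qr" "pq \<le> u" "qr \<le> u" "pr \<le> u"
        "p \<le> pr" "r \<le> pr"
        unfolding pq_def qr_def pr_def u_def
        by (auto intro: le_supI1 le_supI2)
      have h1: "(phi p pq a, psi q pq b) \<in> leq pq" using R_iff[OF a b] ab pq_def by simp
      have h2: "(phi q qr b, psi r qr c) \<in> leq qr" using R_iff[OF b c] bc qr_def by simp
      have m1: "(phi p u a, phi pq u (psi q pq b)) \<in> leq u"
        using phi_mono[OF le(5) _ _ h1] phi_comp[OF le(1) le(5) a] phi_maps psi_maps le a b by simp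
      have m3: "(psi qr u (phi q qr b), psi r u c) \<in> leq u"
        using psi_mono[OF le(6) _ _ h2] psi_comp[OF le(4) le(6) c] phi_maps psi_maps le b c by simp
      have m2: "(phi pq u (psi q pq b), psi qr u (phi q qr b)) \<in> leq u"
        using S1'[OF le(2) le(3) b] u_def by simp
      have chain: "(phi pr u (phi p pr a), psi pr u (psi r pr c)) \<in> leq u"
        using tr[OF tr[OF m1 m2] m3] phi_comp[OF le(8) le(7) a] psi_comp[OF le(9) le(7) c] by simp
      have res: "(phi p pr a, psi r pr c) \<in> leq pr"
      proof (cases "pr = u")
        case True
        then show ?thesis using chain phi_id psi_id phi_maps psi_maps le a c by simp
      next
        case False
        then have "pr < u" using le(7) by simp
        from S2[OF this _ _ chain] show ?thesis using phi_maps psi_maps le a c by simp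
      qed
      show "(a, c) \<in> ?R" using R_iff[OF a c] res pr_def by simp
    qed
    have Ranti: "antisym ?R"
    proof (rule antisymI)
      fix a b assume ab: "(a, b) \<in> ?R" and ba: "(b, a) \<in> ?R"
      then obtain p q where a: "a \<in> A p" and b: "b \<in> A q"
        unfolding sum_rel_def by blast
      define s where "s = sup p q"
      have le: "p \<le> s" "q \<le> s" unfolding s_def by auto
      have h1: "(phi p s a, psi q s b) \<in> leq s" using R_iff[OF a b] ab s_def by simp
      have h2: "(phi q s b, psi p s a) \<in> leq s" using R_iff[OF b a] ba s_def by (simp add: sup_commute)
      show "a = b"
      proof (cases "p < s")
        case True
        have "(phi p s a, psi p s a) \<in> leq s" using tr[OF tr[OF h1 Lm[OF le(2) b]] h2] .
        then show ?thesis using S2[OF True a a] by simp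
      next
        case F: False
        show ?thesis
        proof (cases "q < s")
          case True
          have "(phi q s b, psi q s b) \<in> leq s" using tr[OF tr[OF h2 Lm[OF le(1) a]] h1] .
          then show ?thesis using S2[OF True b b] by simp
        next
          case False
          then have "p = s" "q = s" using F le by auto
          then show ?thesis using h1 h2 an a b phi_id psi_id by simp
        qed
      qed
    qed
    show "?L" using Rsub Rrefl Rtrans Ranti restr
      unfolding partial_order_on_def preorder_on_def by blast
  qed
qed

end
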